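(* For every integer $n\ge 1$, let \[ R_n:=\frac{\pi}{4}-\sum_{m=0}^{n-1}\frac{(-1)^m}{2m+1}=\sum_{m=n}^{\infty}\frac{(-1)^m}{2m+1}. \] Then \begin{align*} R_{n}=\frac{(-1)^{n}(2n-1)!}{16}\sum_{k=0}^{\infty}\frac{1}{16^{k}}\Bigg[&\frac{8}{(8k+1)_{2n}}-\frac{4}{(8k+3)_{2n}}-\frac{4}{(8k+4)_{2n}} \\ &-\frac{2}{(8k+5)_{2n}}+\frac{1}{(8k+7)_{2n}}+\frac{1}{(8k+8)_{2n}}\Bigg]. \end{align*}
   Context: For a real number $a$ and integer $m\ge 0$, $(a)_m$ denotes the rising factorial (Pochhammer symbol): $(a)_0:=1$ and $(a)_m:=a(a+1)\cdots(a+m-1)=\Gamma(a+m)/\Gamma(a)$. Thus $(8k+q)_{2n}$ is a product of $2n$ consecutive factors starting at $8k+q$. *)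

theory Defs
  imports Complex_Main
begin

definition R :: "nat \<Rightarrow> real" where
  "R n = pi / 4 - (\<Sum>m<n. (-1) ^ m / (2 * real m + 1))"

definition bbp_term :: "nat \<Rightarrow> nat \<Rightarrow> real" where
  "bbp_term n k = (1 / 16 ^ k) *
     (8 / pochhammer (8 * real k + 1) (2 * n)
    - 4 / pochhammer (8 * real k + 3) (2 * n)
    - 4 / pochhammer (8 * real k + 4) (2 * n)
    - 2 / pochhammer (8 * real k + 5) (2 * n)
    + 1 / pochhammer (8 * real k + 7) (2 * n)
    + 1 / pochhammer (8 * real k + 8) (2 * n))"

end

theory Submission imports Defs begin

definition Phi :: "nat \<Rightarrow> real \<Rightarrow> real" where
  "Phi m b = fact m / pochhammer b (Suc m)"

lemma phi_rec:
  assumes b: "b > 0"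
  shows "Phi (Suc m) b = Phi m b - Phi m (b + 1)"
proof -
  define P where "P = pochhammer b (Suc m)"
  define Q where "Q = pochhammer (b + 1) (Suc m)"
  have P: "P > 0" unfolding P_def using b by (simp add: pochhammer_pos)
  have Q: "Q > 0" unfolding Q_def using b by (simp add: pochhammer_pos)
  have e1: "pochhammer b (Suc (Suc m)) = b * Q" unfolding Q_def by (rule pochhammer_rec)
  have e2: "pochhammer b (Suc (Suc m)) = (b + real (Suc m)) * P" unfolding P_def by (rule pochhammer_rec')
  have "Phi (Suc m) b = fact (Suc m) / (b * Q)" unfolding Phi_def e1 ..
  moreover have "Phi m b - Phi m (b + 1) = fact m / P - fact m / Q"
    unfolding Phi_def P_def Q_def ..
  moreover have "fact (Suc m) / (b * Q) = fact m / P - fact m / Q"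
  proof -
    have "b * Q = (b + real (Suc m)) * P" using e1 e2 by simp
    hence Qe: "Q = (b + real (Suc m)) * P / b" using b by (simp add: field_simps)
    have bm: "b + real (Suc m) > 0" using b by simp
    define c where "c = b + real (Suc m)"
    have c: "c > 0" "c - b = real (Suc m)" unfolding c_def using b by auto
    have h1: "fact (Suc m)/(b*Q) = (real(Suc m) * fact m)/(c*P)"
      unfolding Qe c_def[symmetric] using b P c by (simp add: fact_Suc)
    have h2: "fact m/Q = b*fact m/(c*P)"
      unfolding Qe c_def[symmetric] using b P c by simp
    have h3: "fact m / P = c*fact m/(c*P)" using c by simp
    have "c*fact m/(c*P) - b*fact m/(c*P) = (c - b) * fact m/(c*P)"
      by (simp add: diff_divide_distrib algebra_simps)
    then show ?thesis unfolding h1 h2 h3 c(2) by simp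
  qed
  ultimately show ?thesis by simp
qed

lemma phi2:
  assumes b: "b > 0"
  shows "Phi (Suc (Suc m)) b = Phi m b - 2 * Phi m (b + 1) + Phi m (b + 2)"
proof -
  have "Phi (Suc (Suc m)) b = Phi (Suc m) b - Phi (Suc m) (b + 1)" using phi_rec[of b] b by simp
  also have "\<dots> = (Phi m b - Phi m (b+1)) - (Phi m (b+1) - Phi m (b+1+1))"
    using phi_rec[of b m] phi_rec[of "b+1" m] b by simp
  finally show ?thesis by (simp add: add.assoc)
qed

lemma poch_mono: "1 \<le> (b::real) \<Longrightarrow> pochhammer 1 m \<le> pochhammer b m"
proof (induction m)
  case 0 then show ?case by simp
next
  case (Suc m)
  have "pochhammer (1::real) (Suc m) = (1 + real m) * pochhammer 1 m" by (rule pochhammer_rec')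
  also have "\<dots> \<le> (b + real m) * pochhammer b m"
    using Suc by (intro mult_mono) (auto simp: pochhammer_nonneg)
  also have "\<dots> = pochhammer b (Suc m)" by (rule pochhammer_rec'[symmetric])
  finally show ?case .
qed

lemma phi_bounds:
  assumes "1 \<le> b"
  shows "0 \<le> Phi m b" "Phi m b \<le> 1 / real (Suc m)"
proof -
  have p: "pochhammer b (Suc m) > 0" using assms by (simp add: pochhammer_pos)
  show "0 \<le> Phi m b" unfolding Phi_def using p by simp
  have "pochhammer 1 (Suc m) \<le> pochhammer b (Suc m)" using poch_mono assms by blast
  hence "fact (Suc m) \<le> pochhammer b (Suc m)" by (simp add: pochhammer_fact)
  hence "Phi m b \<le> fact m / fact (Suc m)" unfolding Phi_def
    using p by (intro divide_left_mono) auto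
  also have "\<dots> = 1 / real (Suc m)"
  proof -
    have f: "(fact m::real) > 0" by simp
    have "fact m + fact m * real m > 0" using f by (simp add: add_pos_nonneg)
    then show ?thesis by (simp add: fact_Suc field_simps)
  qed
  finally show "Phi m b \<le> 1 / real (Suc m)" .
qed

lemma key:
  assumes a: "a \<ge> 0"
  shows "8 * (Phi m (a+1) + Phi (Suc (Suc m)) (a+1))
       - 4 * (Phi m (a+3) + Phi (Suc (Suc m)) (a+3))
       - 4 * (Phi m (a+4) + Phi (Suc (Suc m)) (a+4))
       - 2 * (Phi m (a+5) + Phi (Suc (Suc m)) (a+5))
       + (Phi m (a+7) + Phi (Suc (Suc m)) (a+7))
       + (Phi m (a+8) + Phi (Suc (Suc m)) (a+8))
     = 16 * Phi (Suc m) (a+1) - Phi (Suc m) (a+9)"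
proof -
  have r1: "Phi (Suc m) (a+1) = Phi m (a+1) - Phi m (a+2)" using phi_rec[of "a+1" m] a by (simp add: add.assoc)
  have r9: "Phi (Suc m) (a+9) = Phi m (a+9) - Phi m (a+10)" using phi_rec[of "a+9" m] a by (simp add: add.assoc)
  have s1: "Phi (Suc (Suc m)) (a+1) = Phi m (a+1) - 2 * Phi m (a+2) + Phi m (a+3)" using phi2[of "a+1" m] a by (simp add: add.assoc)
  have s3: "Phi (Suc (Suc m)) (a+3) = Phi m (a+3) - 2 * Phi m (a+4) + Phi m (a+5)" using phi2[of "a+3" m] a by (simp add: add.assoc)
  have s4: "Phi (Suc (Suc m)) (a+4) = Phi m (a+4) - 2 * Phi m (a+5) + Phi m (a+6)" using phi2[of "a+4" m] a by (simp add: add.assoc)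
  have s5: "Phi (Suc (Suc m)) (a+5) = Phi m (a+5) - 2 * Phi m (a+6) + Phi m (a+7)" using phi2[of "a+5" m] a by (simp add: add.assoc)
  have s7: "Phi (Suc (Suc m)) (a+7) = Phi m (a+7) - 2 * Phi m (a+8) + Phi m (a+9)" using phi2[of "a+7" m] a by (simp add: add.assoc)
  have s8: "Phi (Suc (Suc m)) (a+8) = Phi m (a+8) - 2 * Phi m (a+9) + Phi m (a+10)" using phi2[of "a+8" m] a by (simp add: add.assoc)
  show ?thesis unfolding r1 r9 s1 s3 s4 s5 s7 s8 by (simp add: algebra_simps)
qed


definition G :: "nat \<Rightarrow> real \<Rightarrow> real" where
  "G m a = 8 * Phi m (a+1) - 4 * Phi m (a+3) - 4 * Phi m (a+4) - 2 * Phi m (a+5)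
          + Phi m (a+7) + Phi m (a+8)"

lemma G_key: "a \<ge> 0 \<Longrightarrow> G m a + G (Suc (Suc m)) a = 16 * Phi (Suc m) (a+1) - Phi (Suc m) (a+9)"
  using key[of a m] unfolding G_def by (simp add: algebra_simps)

lemma G_bound: assumes "a \<ge> 0" shows "\<bar>G m a\<bar> \<le> 10 / real (Suc m)"
proof -
  have "1 \<le> a + 1" "1 \<le> a + 3" "1 \<le> a + 4" "1 \<le> a + 5" "1 \<le> a + 7" "1 \<le> a + 8" using assms by auto
  note b = phi_bounds[OF this(1)] phi_bounds[OF this(2)] phi_bounds[OF this(3)]
    phi_bounds[OF this(4)] phi_bounds[OF this(5)] phi_bounds[OF this(6)]
  define c where "c = 1 / real (Suc m)"
  have "\<bar>G m a\<bar> \<le> 10 * c" using b[of m] unfolding G_def c_def[symmetric] abs_le_iff by linarith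
  then show ?thesis unfolding c_def by simp
qed

definition t :: "nat \<Rightarrow> nat \<Rightarrow> real" where
  "t n k = (-1)^n / 16 * (1/16)^k * G (2*n-1) (8 * real k)"

definition u :: "nat \<Rightarrow> nat \<Rightarrow> real" where
  "u n k = (-1)^n * (1/16)^k * Phi (2*n) (8 * real k + 1)"

lemma t_eq:
  assumes "n \<ge> 1"
  shows "(-1) ^ n * fact (2 * n - 1) / 16 * bbp_term n k = t n k"
proof -
  define m where "m = 2*n-1"
  have nm: "2*n = Suc m" using assms unfolding m_def by simp
  have "fact m * bbp_term n k = (1/16)^k * G m (8 * real k)"
    unfolding bbp_term_def G_def Phi_def nm
    by (simp add: algebra_simps power_one_over add_ac)
  then show ?thesis unfolding t_def m_def[symmetric] by (simp add: algebra_simps)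
qed

lemma t_diff:
  assumes "n \<ge> 1"
  shows "t n k - t (Suc n) k = u n k - u n (Suc k)"
proof -
  define m where "m = 2*n-1"
  have nm: "2*n = Suc m" "2 * Suc n - 1 = Suc (Suc m)" using assms unfolding m_def by auto
  have e: "8 * real (Suc k) + 1 = 8 * real k + 9" by simp
  have "t n k - t (Suc n) k = (-1)^n / 16 * (1/16)^k * (G m (8 * real k) + G (Suc (Suc m)) (8 * real k))"
    unfolding t_def nm m_def[symmetric] by (simp add: algebra_simps)
  also have "\<dots> = (-1)^n / 16 * (1/16)^k * (16 * Phi (Suc m) (8 * real k + 1) - Phi (Suc m) (8 * real k + 9))"
    by (simp add: G_key)
  also have "\<dots> = u n k - u n (Suc k)"
    unfolding u_def nm e by (simp add: algebra_simps)
  finally show ?thesis .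
qed

lemma t_bound:
  assumes "n \<ge> 1"
  shows "\<bar>t n k\<bar> \<le> (1/16)^k / real n"
proof -
  have nm: "Suc (2*n-1) = 2*n" using assms by simp
  have "\<bar>t n k\<bar> = (1/16) * (1/16)^k * \<bar>G (2*n-1) (8 * real k)\<bar>"
    unfolding t_def by (simp add: abs_mult power_abs)
  also have "\<dots> \<le> (1/16) * (1/16)^k * (10 / real (Suc (2*n-1)))"
    by (intro mult_left_mono G_bound) auto
  also have "\<dots> \<le> (1/16)^k / real n"
    unfolding nm using assms by (simp add: field_simps)
  finally show ?thesis .
qed

lemma t_summable: "n \<ge> 1 \<Longrightarrow> summable (t n)"
  apply (rule summable_comparison_test[where g = "\<lambda>k. (1/16)^k / real n"])
   apply (auto intro!: t_bound summable_divide summable_geometric)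
  done

lemma S_bound:
  assumes "n \<ge> 1"
  shows "\<bar>suminf (t n)\<bar> \<le> (16/15) / real n"
proof -
  have sg: "summable (\<lambda>k. (1/16::real)^k / real n)"
    by (intro summable_divide summable_geometric) auto
  have sg': "summable (\<lambda>k. - ((1/16::real)^k / real n))"
    using sg by (rule summable_minus)
  have ge: "(\<Sum>k. (1/16::real)^k / real n) = (16/15) / real n"
    using suminf_divide[OF summable_geometric[of "1/16::real"]] suminf_geometric[of "1/16::real"]
    by simp
  have b: "\<And>k. \<bar>t n k\<bar> \<le> (1/16)^k / real n" using t_bound assms by blast
  have "suminf (t n) \<le> (\<Sum>k. (1/16::real)^k / real n)"
    using b by (intro suminf_le t_summable assms sg) (auto simp: abs_le_iff)
  moreover have "(\<Sum>k. - ((1/16::real)^k / real n)) \<le> suminf (t n)"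
  proof (intro suminf_le t_summable assms sg')
    fix k show "- ((1/16::real)^k / real n) \<le> t n k" using b[of k] by linarith
  qed
  moreover have "(\<Sum>k. - ((1/16::real)^k / real n)) = - (\<Sum>k. (1/16::real)^k / real n)"
    using sg by (rule suminf_minus)
  ultimately show ?thesis unfolding ge by linarith
qed


lemma u0: "u n 0 = (-1)^n / (2 * real n + 1)"
proof -
  have "Phi (2*n) 1 = 1 / real (Suc (2*n))"
    unfolding Phi_def pochhammer_fact[symmetric]
    by (simp add: fact_Suc del: of_nat_Suc)
  then show ?thesis unfolding u_def by simp
qed

lemma u_lim: "u n \<longlonglongrightarrow> 0"
proof (rule tendsto_sandwich[where f = "\<lambda>k. - ((1/16::real)^k)" and h = "\<lambda>k. (1/16::real)^k"])
  have b: "\<bar>u n k\<bar> \<le> (1/16)^k" for k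
  proof -
    have "1 \<le> 8 * real k + 1" by simp
    note pb = phi_bounds[OF this, of "2*n"]
    have "1 / real (Suc (2*n)) \<le> 1" by simp
    then have "\<bar>Phi (2*n) (8 * real k + 1)\<bar> \<le> 1" using pb by linarith
    then show ?thesis unfolding u_def by (simp add: abs_mult power_abs mult_left_le)
  qed
  have b1: "- ((1/16::real)^k) \<le> u n k" for k using b[of k] by linarith
  have b2: "u n k \<le> (1/16::real)^k" for k using b[of k] by linarith
  show "\<forall>\<^sub>F k in sequentially. - ((1/16::real)^k) \<le> u n k" using b1 by (intro always_eventually allI)
  show "\<forall>\<^sub>F k in sequentially. u n k \<le> (1/16::real)^k" using b2 by (intro always_eventually allI)
  show "(\<lambda>k. - ((1/16::real)^k)) \<longlonglongrightarrow> 0" using tendsto_minus[OF LIMSEQ_power_zero[of "1/16::real"]] by simp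
  show "(\<lambda>k. ((1/16::real)^k)) \<longlonglongrightarrow> 0" using LIMSEQ_power_zero[of "1/16::real"] by simp
qed

lemma S_step:
  assumes "n \<ge> 1"
  shows "suminf (t n) - suminf (t (Suc n)) = (-1)^n / (2 * real n + 1)"
proof -
  have "suminf (t n) - suminf (t (Suc n)) = (\<Sum>k. t n k - t (Suc n) k)"
    using suminf_diff[OF t_summable t_summable] assms by simp
  also have "\<dots> = (\<Sum>k. u n k - u n (Suc k))" using t_diff assms by simp
  also have "\<dots> = u n 0 - 0" using telescope_sums'[OF u_lim] by (rule sums_unique[symmetric])
  finally show ?thesis using u0 by simp
qed

lemma R_step: "R (Suc n) = R n - (-1)^n / (2 * real n + 1)"
  unfolding R_def by simp

lemma S_lim: "(\<lambda>n. suminf (t n)) \<longlonglongrightarrow> 0"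
proof (rule tendsto_sandwich[where f = "\<lambda>n. - ((16/15) / real n)" and h = "\<lambda>n. (16/15) / real n"])
  show "\<forall>\<^sub>F n in sequentially. - ((16/15) / real n) \<le> suminf (t n)"
    using eventually_ge_at_top[of 1] by eventually_elim (use S_bound in \<open>force simp: abs_le_iff\<close>)
  show "\<forall>\<^sub>F n in sequentially. suminf (t n) \<le> (16/15) / real n"
    using eventually_ge_at_top[of 1] by eventually_elim (use S_bound in \<open>force simp: abs_le_iff\<close>)
  show "(\<lambda>n. - ((16/15) / real n)) \<longlonglongrightarrow> (0::real)"
    using tendsto_minus[OF lim_const_over_n[of "16/15::real"]] by simp
  show "(\<lambda>n. (16/15) / real n) \<longlonglongrightarrow> (0::real)"
    using lim_const_over_n[of "16/15::real"] by simp
qed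

lemma R_lim: "R \<longlonglongrightarrow> 0"
proof -
  have "(\<lambda>k. (-1)^k * (1 / real (k*2+1) * (1::real) ^ (k*2+1))) sums arctan 1"
    using summable_arctan_series[of 1] arctan_series[of 1] by (simp add: summable_sums)
  then have "(\<lambda>k. (-1)^k / (2 * real k + 1)) sums (pi/4)"
    by (simp add: arctan_one algebra_simps)
  then have "(\<lambda>n. \<Sum>m<n. (-1)^m / (2 * real m + 1)) \<longlonglongrightarrow> pi/4" by (simp add: sums_def)
  then have "(\<lambda>n. pi/4 - (\<Sum>m<n. (-1)^m / (2 * real m + 1))) \<longlonglongrightarrow> pi/4 - pi/4"
    by (intro tendsto_diff tendsto_const)
  then show ?thesis unfolding R_def[abs_def] by simp
qed

theorem theorem1:
  fixes n :: nat
  assumes "n \<ge> 1"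
  shows "(\<lambda>k. (-1) ^ n * fact (2 * n - 1) / 16 * bbp_term n k) sums R n"
proof -
  define E where "E n = suminf (t n) - R n" for n
  have stepE: "E (Suc j) = E j" if "j \<ge> 1" for j
    using S_step[OF that] R_step[of j] unfolding E_def by linarith
  have const: "E j = E 1" if "j \<ge> 1" for j
    using that
  proof (induction j rule: dec_induct)
    case base then show ?case by simp
  next
    case (step j) then show ?case using stepE[of j] by (metis)
  qed
  have "E \<longlonglongrightarrow> 0 - 0" unfolding E_def[abs_def] by (intro tendsto_diff S_lim R_lim)
  then have "(\<lambda>j. E (Suc j)) \<longlonglongrightarrow> 0" by (simp add: LIMSEQ_Suc)
  moreover have "(\<lambda>j. E (Suc j)) = (\<lambda>j. E 1)"
    by (rule ext, rule const) simp
  ultimately have "(\<lambda>j. E 1) \<longlonglongrightarrow> 0" by simp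
  then have "E 1 = 0" by (simp add: LIMSEQ_const_iff)
  then have "E n = 0" using const[OF assms] by simp
  then have sR: "suminf (t n) = R n" unfolding E_def by simp
  have eq: "(\<lambda>k. (-1) ^ n * fact (2 * n - 1) / 16 * bbp_term n k) = t n"
    by (rule ext) (rule t_eq[OF assms])
  have "t n sums suminf (t n)" using t_summable[OF assms] by (rule summable_sums)
  then show ?thesis unfolding eq sR .
qed

end
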